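(* Let $n\ge2$ and let $G,H$ be non-zero $n$-dimensional real tensors. Let their $n$-dimensional convolution $(G*H)(t)=\sum_{\tau\in\mathbb{Z}^n}G(\tau)H(t-\tau)$ be evaluated on a box of consecutive output positions of size $s_1\times\cdots\times s_n$, giving $G*H\in\mathbb{R}^{s_1\times\cdots\times s_n}$. Then for each $k=1,\dots,n$, $\operatorname{rank}(k,G*H)\le\min\big(s_k,\operatorname{rank}(k,G)\operatorname{rank}(k,H)\big)$.
   Context: Tensors are indexed from $0$ and regarded as functions on $\mathbb{Z}^n$ vanishing outside their index ranges. For a tensor $A$, $\operatorname{rank}(k,A)$ is the $k$-th Tucker rank, i.e. the rank of the mode-$k$ matricization of $A$ (the matrix whose columns are the mode-$k$ fibers of $A$); for a matrix this is its column/row rank. *)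

theory Defs
  imports "Jordan_Normal_Form.DL_Rank"
begin

text \<open>An n-dimensional real tensor with index ranges d (a list of length n) is
  represented as a function on integer index lists (points of Z^n) that vanishes
  outside the box of valid indices.\<close>

definition in_box :: "nat list \<Rightarrow> int list \<Rightarrow> bool" where
  "in_box d x \<longleftrightarrow> length x = length d \<and> (\<forall>i<length d. 0 \<le> x ! i \<and> x ! i < int (d ! i))"

definition is_tensor :: "nat list \<Rightarrow> (int list \<Rightarrow> real) \<Rightarrow> bool" where
  "is_tensor d A \<longleftrightarrow> (\<forall>x. \<not> in_box d x \<longrightarrow> A x = 0)"

definition mode_fiber :: "nat \<Rightarrow> nat list \<Rightarrow> (int list \<Rightarrow> real) \<Rightarrow> int list \<Rightarrow> real vec" where
  "mode_fiber k d A x = vec (d ! k) (\<lambda>i. A (x[k := int i]))"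

text \<open>Mode-k matricization: the (d!k) x (product of the other d!j) matrix whose
  columns are all mode-k fibers of A (column order is irrelevant for the rank).\<close>
definition matricization :: "nat \<Rightarrow> nat list \<Rightarrow> (int list \<Rightarrow> real) \<Rightarrow> real mat" where
  "matricization k d A = mat_of_cols (d ! k)
     [mode_fiber k d A (map int x). x \<leftarrow> product_lists (map (\<lambda>m. [0..<m]) (d[k := 1]))]"

text \<open>Tucker rank rank(k,A) (k is 0-based here).\<close>
definition tucker_rank :: "nat \<Rightarrow> nat list \<Rightarrow> (int list \<Rightarrow> real) \<Rightarrow> nat" where
  "tucker_rank k d A = vec_space.rank (d ! k) (matricization k d A)"

text \<open>n-dimensional convolution (G*H)(t) = sum over tau in Z^n of G(tau) H(t - tau);
  only the finitely many tau with G tau \<noteq> 0 contribute.\<close>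
definition conv :: "(int list \<Rightarrow> real) \<Rightarrow> (int list \<Rightarrow> real) \<Rightarrow> int list \<Rightarrow> real" where
  "conv G H t = (\<Sum>\<tau> \<in> {\<tau>. length \<tau> = length t \<and> G \<tau> \<noteq> 0}. G \<tau> * H (map2 (-) t \<tau>))"

definition conv_box :: "int list \<Rightarrow> nat list \<Rightarrow> (int list \<Rightarrow> real) \<Rightarrow> (int list \<Rightarrow> real) \<Rightarrow> int list \<Rightarrow> real" where
  "conv_box off s G H j = (if in_box s j then conv G H (map2 (+) off j) else 0)"

end

theory Submission
  imports Defs
begin

lemma (in vec_space) rank_le_span_card:
  assumes A: "A \<in> carrier_mat n nc" and W: "W \<subseteq> carrier_vec n" "finite W"
    and sub: "set (cols A) \<subseteq> span W"
  shows "rank A \<le> card W"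
proof -
  have vs: "vectorspace class_ring (vs (span W))" using span_is_subspace[THEN subspace_is_vs, of W] W by auto
  have sm: "submodule class_ring (span W) V" using W by (simp add: span_is_submodule)
  have sp: "subspace class_ring (span (set (cols A))) (vs (span W))"
    using vectorspace.span_is_subspace[OF vs, of "set (cols A)", unfolded
      span_li_not_depend(1)[OF sub sm]] sub by auto
  have fd: "vectorspace.fin_dim class_ring (vs (span W))"
       "vectorspace.fin_dim class_ring (vs (span W)\<lparr>carrier := span (set (cols A))\<rparr>)"
    using fin_dim_span fin_dim_span_cols A W by auto
  have WW: "W \<subseteq> span W" using in_own_span W by auto
  have gen: "LinearCombinations.module.span class_ring (vs (span W)) W = carrier (vs (span W))"
    using span_li_not_depend(1)[OF WW sm] by simp
  have "vectorspace.dim class_ring (vs (span W)) \<le> card W"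
    using vectorspace.gen_ge_dim[OF vs W(2)] WW gen by simp
  then show ?thesis unfolding rank_def using vectorspace.subspace_dim[OF vs sp fd(1) fd(2)] by simp
qed

lemma (in vec_space) sum_in_span:
  assumes "finite Q" "f ` Q \<subseteq> carrier_vec n"
  shows "vec n (\<lambda>i. \<Sum>q\<in>Q. b q * f q $ i) \<in> span (f ` Q)"
  using assms
proof (induction Q rule: finite_induct)
  case empty
  have sm: "submodule class_ring (span (f ` {})) V" by (rule span_is_submodule) simp
  have "\<zero>\<^bsub>V\<^esub> \<in> span (f ` {})" by (rule submodule.zero_closed[OF sm])
  moreover have "vec n (\<lambda>i. \<Sum>q\<in>{}. b q * f q $ i) = \<zero>\<^bsub>V\<^esub>"
    by (simp only: sum.empty module_vec_simps zero_vec_def)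
  ultimately show ?case by simp
next
  case (insert q Q)
  have fq: "f q \<in> carrier_vec n" using insert.prems by simp
  have c: "f ` insert q Q \<subseteq> carrier_vec n" using insert.prems by simp
  have sm: "submodule class_ring (span (f ` insert q Q)) V" by (rule span_is_submodule[OF c])
  have e: "vec n (\<lambda>i. \<Sum>q\<in>insert q Q. b q * f q $ i) = b q \<cdot>\<^sub>v f q + vec n (\<lambda>i. \<Sum>q\<in>Q. b q * f q $ i)"
  proof (rule eq_vecI)
    show "dim_vec (vec n (\<lambda>i. \<Sum>q\<in>insert q Q. b q * f q $ i)) = dim_vec (b q \<cdot>\<^sub>v f q + vec n (\<lambda>i. \<Sum>q\<in>Q. b q * f q $ i))"
      by simp
    fix i assume "i < dim_vec (b q \<cdot>\<^sub>v f q + vec n (\<lambda>i. \<Sum>q\<in>Q. b q * f q $ i))"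
    then have i: "i < n" by simp
    have "f q $ i * b q = b q * f q $ i" by simp
    then show "vec n (\<lambda>i. \<Sum>q\<in>insert q Q. b q * f q $ i) $ i = (b q \<cdot>\<^sub>v f q + vec n (\<lambda>i. \<Sum>q\<in>Q. b q * f q $ i)) $ i"
      using i fq insert.hyps by simp
  qed
  have sub: "f ` Q \<subseteq> f ` insert q Q" by blast
  have "f ` Q \<subseteq> carrier_vec n" using insert.prems by simp
  then have m1: "vec n (\<lambda>i. \<Sum>q\<in>Q. b q * f q $ i) \<in> span (f ` insert q Q)"
    using insert.IH span_is_monotone[OF sub] by blast
  have "f q \<in> span (f ` insert q Q)" by (rule span_mem[OF c]) simp
  then have m2: "b q \<cdot>\<^sub>v f q \<in> span (f ` insert q Q)"
    using submodule.smult_closed[OF sm, of "b q" "f q"] by simp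
  have "b q \<cdot>\<^sub>v f q + vec n (\<lambda>i. \<Sum>q\<in>Q. b q * f q $ i) \<in> span (f ` insert q Q)"
    using submodule.m_closed[OF sm m2 m1] by simp
  then show ?case unfolding e .
qed

lemma (in vec_space) rank_basis:
  assumes A: "A \<in> carrier_mat n nc"
  shows "\<exists>b. finite b \<and> card b = rank A \<and> b \<subseteq> carrier_vec n \<and>
     (\<forall>c\<in>set (cols A). \<exists>a. \<forall>i<n. c $ i = (\<Sum>u\<in>b. a u * u $ i))"
proof -
  let ?S = "set (cols A)"
  have S: "?S \<subseteq> carrier_vec n" using A cols_dim by blast
  have vs: "vectorspace class_ring (vs (span ?S))" using span_is_subspace[THEN subspace_is_vs, of ?S] S by auto
  have sm: "submodule class_ring (span ?S) V" using S by (simp add: span_is_submodule)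
  have fd: "vectorspace.fin_dim class_ring (vs (span ?S))" using fin_dim_span_cols A by auto
  obtain b where fin: "finite b" and b: "vectorspace.basis class_ring (vs (span ?S)) b" using vectorspace.finite_basis_exists[OF vs fd] by blast
  have bsub: "b \<subseteq> span ?S" using b vectorspace.basis_def[OF vs] by auto
  have bspan: "LinearCombinations.module.span class_ring (vs (span ?S)) b = span ?S"
    using b vectorspace.basis_def[OF vs] by auto
  have spb: "span b = span ?S" using span_li_not_depend(1)[OF bsub sm] bspan by simp
  have bc: "b \<subseteq> carrier_vec n" using bsub span_closed S by blast
  have card: "card b = rank A" unfolding rank_def using vectorspace.dim_basis[OF vs] b fin by auto
  have "\<forall>c\<in>?S. \<exists>a. \<forall>i<n. c $ i = (\<Sum>u\<in>b. a u * u $ i)"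
  proof
    fix c assume c: "c \<in> ?S"
    then have "c \<in> span b" using spb in_own_span S by auto
    then obtain a where "lincomb a b = c" using finite_in_span[OF fin] bc by auto
    then show "\<exists>a. \<forall>i<n. c $ i = (\<Sum>u\<in>b. a u * u $ i)" using lincomb_index bc by auto
  qed
  then show ?thesis using fin card bc by blast
qed

definition vf :: "nat \<Rightarrow> real vec \<Rightarrow> int \<Rightarrow> real" where
  "vf m u t = (if 0 \<le> t \<and> t < int m then u $ nat t else 0)"

definition Pk :: "nat \<Rightarrow> nat list \<Rightarrow> int list \<Rightarrow> bool" where
  "Pk k d x \<longleftrightarrow> length x = length d \<and> (\<forall>j<length d. j \<noteq> k \<longrightarrow> 0 \<le> x ! j \<and> x ! j < int (d ! j))"

lemma Pk_upd[simp]: "k < length d \<Longrightarrow> Pk k d (x[k:=a]) = Pk k d x"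
  unfolding Pk_def by (auto simp: nth_list_update)

lemma in_box_Pk: "k < length d \<Longrightarrow> in_box d x \<longleftrightarrow> Pk k d x \<and> 0 \<le> x ! k \<and> x ! k < int (d ! k)"
  unfolding Pk_def in_box_def by auto

lemma matr_carrier: "matricization k d A \<in> carrier_mat (d!k) (length (product_lists (map (\<lambda>m. [0..<m]) (d[k := 1]))))"
  unfolding matricization_def by (metis (no_types, lifting) length_map mat_of_cols_carrier)

lemma matr_cols: "set (cols (matricization k d A)) = (\<lambda>x. mode_fiber k d A (map int x)) ` set (product_lists (map (\<lambda>m. [0..<m]) (d[k := 1])))"
  unfolding matricization_def by (subst cols_mat_of_cols) (auto simp: mode_fiber_def)

lemma Pk_col:
  assumes "k < length d" "Pk k d x"
  shows "vec (d!k) (\<lambda>i. A (x[k := int i])) \<in> set (cols (matricization k d A))"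
proof -
  let ?z = "map nat (x[k:=0])"
  have z: "?z \<in> set (product_lists (map (\<lambda>m. [0..<m]) (d[k := 1])))"
    using assms unfolding product_lists_set Pk_def
    by (auto simp: list_all2_conv_all_nth nth_list_update)
  have mz: "map int ?z = x[k:=0]" using assms unfolding Pk_def
    by (auto intro!: nth_equalityI simp: nth_list_update)
  have "mode_fiber k d A (map int ?z) = vec (d!k) (\<lambda>i. A (x[k := int i]))"
    unfolding mz mode_fiber_def by simp
  then show ?thesis using z unfolding matr_cols by force
qed

lemma tensor_decomp:
  assumes T: "is_tensor d A" and k: "k < length d"
  shows "\<exists>b c. finite b \<and> card b = tucker_rank k d A \<and>
     (\<forall>\<tau>. A \<tau> = (\<Sum>u\<in>b. c u \<tau> * vf (d!k) u (\<tau>!k))) \<and> (\<forall>u \<tau> j. c u (\<tau>[k:=j]) = c u \<tau>)"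
proof -
  obtain b where fin: "finite b" and card: "card b = tucker_rank k d A"
    and bc: "b \<subseteq> carrier_vec (d!k)"
    and co: "\<forall>c\<in>set (cols (matricization k d A)). \<exists>a. \<forall>i<d!k. c $ i = (\<Sum>u\<in>b. a u * u $ i)"
    using vec_space.rank_basis[OF matr_carrier[of k d A]] unfolding tucker_rank_def by blast
  define coef where "coef c = (SOME a. \<forall>i<d!k. c $ i = (\<Sum>u\<in>b. a u * u $ i))" for c :: "real vec"
  define cf where "cf u \<tau> = (if Pk k d \<tau> then coef (vec (d!k) (\<lambda>i. A (\<tau>[k := int i]))) u else 0)" for u \<tau>
  have inv: "\<forall>u \<tau> j. cf u (\<tau>[k:=j]) = cf u \<tau>" unfolding cf_def using k by simp
  have rep: "A \<tau> = (\<Sum>u\<in>b. cf u \<tau> * vf (d!k) u (\<tau>!k))" for \<tau>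
  proof (cases "Pk k d \<tau>")
    case False
    then have "A \<tau> = 0" using T k in_box_Pk unfolding is_tensor_def by blast
    then show ?thesis using False by (simp add: cf_def)
  next
    case True
    show ?thesis
    proof (cases "0 \<le> \<tau>!k \<and> \<tau>!k < int (d!k)")
      case False
      then have "A \<tau> = 0" using T k in_box_Pk unfolding is_tensor_def by blast
      moreover have "\<forall>u. vf (d!k) u (\<tau>!k) = 0" using False vf_def by auto
      ultimately show ?thesis by simp
    next
      case r: True
      let ?c = "vec (d!k) (\<lambda>i. A (\<tau>[k := int i]))"
      have "\<exists>a. \<forall>i<d!k. ?c $ i = (\<Sum>u\<in>b. a u * u $ i)" using co Pk_col[OF k True] by blast
      then have a: "\<forall>i<d!k. ?c $ i = (\<Sum>u\<in>b. coef ?c u * u $ i)" unfolding coef_def by (rule someI_ex)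
      have lt: "length \<tau> = length d" using True Pk_def by auto
      have "nat (\<tau>!k) < d!k" using r by auto
      then have "?c $ nat (\<tau>!k) = A (\<tau>[k := \<tau>!k])" using r by simp
      then have "A \<tau> = ?c $ nat (\<tau>!k)" by simp
      also have "\<dots> = (\<Sum>u\<in>b. coef ?c u * u $ nat (\<tau>!k))" using a r by auto
      finally show ?thesis using True r by (simp add: cf_def vf_def)
    qed
  qed
  show ?thesis using fin card rep inv by blast
qed


lemma box_finite: "finite {\<tau>. in_box d \<tau>}"
proof -
  have "{\<tau>. in_box d \<tau>} \<subseteq> {xs. set xs \<subseteq> {0..<int (sum_list d)} \<and> length xs = length d}"
  proof (safe)
    fix \<tau> x assume b: "in_box d \<tau>" and x: "x \<in> set \<tau>"
    then obtain i where i: "i < length \<tau>" "x = \<tau>!i" by (auto simp: in_set_conv_nth)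
    have "d!i \<le> sum_list d" using b i by (auto simp: in_box_def intro!: member_le_sum_list)
    then show "x \<in> {0..<int (sum_list d)}" using b i unfolding in_box_def by force
  qed (auto simp: in_box_def)
  then show ?thesis using finite_lists_length_eq[of "{0..<int (sum_list d)}"] finite_subset by blast
qed

lemma conv_sum:
  assumes "is_tensor g G" "length t = length g"
  shows "conv G H t = (\<Sum>\<tau>\<in>{\<tau>. in_box g \<tau>}. G \<tau> * H (map2 (-) t \<tau>))"
  unfolding conv_def
proof (rule sum.mono_neutral_left[OF box_finite])
  show "{\<tau>. length \<tau> = length t \<and> G \<tau> \<noteq> 0} \<subseteq> {\<tau>. in_box g \<tau>}"
    using assms unfolding is_tensor_def by blast
  show "\<forall>i\<in>{\<tau>. in_box g \<tau>} - {\<tau>. length \<tau> = length t \<and> G \<tau> \<noteq> 0}. G i * H (map2 (-) t i) = 0"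
    using assms unfolding in_box_def by auto
qed

lemma box_split:
  assumes k: "k < length d"
  shows "(\<Sum>\<tau>\<in>{\<tau>. in_box d \<tau>}. f \<tau>) = (\<Sum>\<tau>\<in>{\<tau>. in_box (d[k:=1]) \<tau>}. \<Sum>a\<in>{0..<int (d!k)}. f (\<tau>[k:=a]))"
proof -
  let ?B = "{\<tau>. in_box (d[k:=1]) \<tau>}" and ?I = "{0..<int (d!k)}"
  let ?h = "\<lambda>(\<tau>::int list, a). \<tau>[k:=a]"
  have inj: "inj_on ?h (?B \<times> ?I)"
  proof (rule inj_onI)
    fix p q assume pB: "p \<in> ?B \<times> ?I" and qB: "q \<in> ?B \<times> ?I" and e0: "?h p = ?h q"
    obtain \<tau> a where p: "p = (\<tau>, a)" by (cases p)
    obtain \<sigma> b where q: "q = (\<sigma>, b)" by (cases q)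
    have t: "\<tau> \<in> ?B" and s: "\<sigma> \<in> ?B" and e: "\<tau>[k:=a] = \<sigma>[k:=b]" using pB qB e0 p q by auto
    have l: "length \<tau> = length d" "length \<sigma> = length d" using t s by (auto simp: in_box_def)
    have z: "\<tau>!k = 0" "\<sigma>!k = 0" using t s k by (auto simp: in_box_def)
    have "a = b" using arg_cong[OF e, of "\<lambda>x. x!k"] l k by simp
    moreover have "\<tau> = \<sigma>"
    proof (rule nth_equalityI)
      show "length \<tau> = length \<sigma>" using l by simp
      fix i assume "i < length \<tau>"
      then show "\<tau>!i = \<sigma>!i" using arg_cong[OF e, of "\<lambda>x. x!i"] z by (cases "i = k") auto
    qed
    ultimately show "p = q" using p q by simp
  qed
  have img: "?h ` (?B \<times> ?I) = {\<tau>. in_box d \<tau>}"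
  proof (intro equalityI subsetI)
    fix x assume "x \<in> ?h ` (?B \<times> ?I)"
    then show "x \<in> {\<tau>. in_box d \<tau>}" using k
      by (auto simp: in_box_def nth_list_update split: if_splits)
  next
    fix x assume x: "x \<in> {\<tau>. in_box d \<tau>}"
    have "(x[k:=0], x!k) \<in> ?B \<times> ?I" using x k by (auto simp: in_box_def nth_list_update)
    moreover have "x = ?h (x[k:=0], x!k)" by simp
    ultimately show "x \<in> ?h ` (?B \<times> ?I)" by blast
  qed
  have "(\<Sum>\<tau>\<in>{\<tau>. in_box d \<tau>}. f \<tau>) = (\<Sum>p\<in>?B \<times> ?I. f (?h p))"
    unfolding img[symmetric] by (rule sum.reindex[OF inj, unfolded comp_def])
  also have "\<dots> = (\<Sum>\<tau>\<in>?B. \<Sum>a\<in>?I. f (\<tau>[k:=a]))"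
    by (subst sum.cartesian_product) (simp add: case_prod_beta)
  finally show ?thesis .
qed


lemma (in vec_space) rank_le_family:
  assumes A: "A \<in> carrier_mat n nc" and Q: "finite Q" "f ` Q \<subseteq> carrier_vec n"
    and co: "\<forall>c\<in>set (cols A). \<exists>\<beta>. \<forall>i<n. c $ i = (\<Sum>q\<in>Q. \<beta> q * f q $ i)"
  shows "rank A \<le> card Q"
proof -
  have "set (cols A) \<subseteq> span (f ` Q)"
  proof
    fix c assume c: "c \<in> set (cols A)"
    then obtain \<beta> where \<beta>: "\<forall>i<n. c $ i = (\<Sum>q\<in>Q. \<beta> q * f q $ i)" using co by blast
    have "c \<in> carrier_vec n" using c A cols_dim by blast
    then have "c = vec n (\<lambda>i. \<Sum>q\<in>Q. \<beta> q * f q $ i)" using \<beta> by (auto intro!: eq_vecI)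
    then show "c \<in> span (f ` Q)" using sum_in_span[OF Q] by simp
  qed
  then have "rank A \<le> card (f ` Q)" using rank_le_span_card[OF A Q(2)] Q by auto
  also have "\<dots> \<le> card Q" using card_image_le Q by auto
  finally show ?thesis .
qed

lemma list_shift:
  assumes "length off = n" "length y = n" "length \<tau> = n" "k < n"
  shows "map2 (-) (map2 (+) off (y[k:=i])) (\<tau>[k:=a]) = (map2 (-) (map2 (+) off y) \<tau>)[k := off!k + i - a]"
  using assms by (auto intro!: nth_equalityI simp: nth_list_update)

theorem lemma30:
  fixes n :: nat and g h s :: "nat list" and off :: "int list"
    and G H :: "int list \<Rightarrow> real"
  assumes "n \<ge> 2"
    and "length g = n" and "length h = n" and "length s = n" and "length off = n"
    and "is_tensor g G" and "is_tensor h H"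
    and "\<exists>x. G x \<noteq> 0" and "\<exists>x. H x \<noteq> 0"
    and "k < n"
  shows "tucker_rank k s (conv_box off s G H)
           \<le> min (s ! k) (tucker_rank k g G * tucker_rank k h H)"
proof -
  note lg = assms(2) and lh = assms(3) and ls = assms(4) and lo = assms(5) and k = assms(10)
  obtain bG cG where bG: "finite bG" "card bG = tucker_rank k g G"
    and repG: "\<forall>\<tau>. G \<tau> = (\<Sum>u\<in>bG. cG u \<tau> * vf (g!k) u (\<tau>!k))"
    and invG: "\<forall>u \<tau> j. cG u (\<tau>[k:=j]) = cG u \<tau>"
    using tensor_decomp[OF assms(6), of k] k lg by blast
  obtain bH cH where bH: "finite bH" "card bH = tucker_rank k h H"
    and repH: "\<forall>\<tau>. H \<tau> = (\<Sum>u\<in>bH. cH u \<tau> * vf (h!k) u (\<tau>!k))"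
    and invH: "\<forall>u \<tau> j. cH u (\<tau>[k:=j]) = cH u \<tau>"
    using tensor_decomp[OF assms(7), of k] k lh by blast
  define K where "K = s!k"
  define CB where "CB = conv_box off s G H"
  define M where "M = matricization k s CB"
  have Mc: "M \<in> carrier_mat K (length (product_lists (map (\<lambda>m. [0..<m]) (s[k := 1]))))"
    unfolding M_def K_def by (rule matr_carrier)
  have colsM: "\<forall>c\<in>set (cols M). \<exists>y. length y = n \<and> (\<forall>i<K. c $ i = CB (y[k := int i]))"
  proof
    fix c assume "c \<in> set (cols M)"
    then obtain x where x: "x \<in> set (product_lists (map (\<lambda>m. [0..<m]) (s[k := 1])))"
      and c: "c = mode_fiber k s CB (map int x)" unfolding M_def matr_cols by blast
    have "length x = n" using in_set_product_lists_length[OF x] ls by simp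
    then show "\<exists>y. length y = n \<and> (\<forall>i<K. c $ i = CB (y[k := int i]))"
      using c by (auto simp: mode_fiber_def K_def intro!: exI[of _ "map int x"])
  qed
  have r1: "tucker_rank k s CB \<le> K"
  proof -
    have "vec_space.rank K M \<le> card {0..<K}"
    proof (rule vec_space.rank_le_family[OF Mc, of "{0..<K}" "unit_vec K"])
      show "finite {0..<K}" by simp
      show "unit_vec K ` {0..<K} \<subseteq> carrier_vec K" by auto
      show "\<forall>c\<in>set (cols M). \<exists>\<beta>. \<forall>i<K. c $ i = (\<Sum>q\<in>{0..<K}. \<beta> q * unit_vec K q $ i)"
      proof
        fix c assume "c \<in> set (cols M)"
        show "\<exists>\<beta>. \<forall>i<K. c $ i = (\<Sum>q\<in>{0..<K}. \<beta> q * unit_vec K q $ i)"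
        proof (intro exI allI impI)
          fix i assume i: "i < K"
          have "(\<Sum>q\<in>{0..<K}. c $ q * unit_vec K q $ i) = (\<Sum>q\<in>{0..<K}. if q = i then c $ i else 0)"
            using i by (intro sum.cong) (auto simp: unit_vec_def)
          then show "c $ i = (\<Sum>q\<in>{0..<K}. c $ q * unit_vec K q $ i)" using i by simp
        qed
      qed
    qed
    then show ?thesis unfolding tucker_rank_def M_def K_def by simp
  qed
  define w where "w q = vec K (\<lambda>i. \<Sum>a\<in>{0..<int (g!k)}. vf (g!k) (fst q) a * vf (h!k) (snd q) (off!k + int i - a))" for q
  let ?Q = "bG \<times> bH"
  let ?B = "{\<tau>. in_box (g[k:=1]) \<tau>}"
  have key: "\<exists>\<beta>. \<forall>i<K. CB (y[k := int i]) = (\<Sum>q\<in>?Q. \<beta> q * w q $ i)" if ly: "length y = n" for y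
  proof (cases "Pk k s y")
    case False
    show ?thesis
    proof (intro exI[of _ "\<lambda>q. 0"] allI impI)
      fix i assume "i < K"
      have "in_box s (y[k := int i]) \<longleftrightarrow> Pk k s (y[k := int i]) \<and> 0 \<le> (y[k := int i])!k \<and> (y[k := int i])!k < int (s!k)"
        by (rule in_box_Pk) (use k ls in simp)
      then have "\<not> in_box s (y[k := int i])" using False k ls by simp
      then show "CB (y[k := int i]) = (\<Sum>q\<in>?Q. 0 * w q $ i)" by (simp add: CB_def conv_box_def)
    qed
  next
    case True
    define D where "D \<tau> = map2 (-) (map2 (+) off y) \<tau>" for \<tau>
    define \<beta> where "\<beta> q = (\<Sum>\<tau>\<in>?B. cG (fst q) \<tau> * cH (snd q) (D \<tau>))" for q
    show ?thesis
    proof (intro exI[of _ \<beta>] allI impI)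
      fix i assume i: "i < K"
      let ?t = "map2 (+) off (y[k := int i])"
      let ?Y = "\<lambda>q a. vf (g!k) (fst q) a * vf (h!k) (snd q) (off!k + int i - a)"
      have "in_box s (y[k := int i]) \<longleftrightarrow> Pk k s (y[k := int i]) \<and> 0 \<le> (y[k := int i])!k \<and> (y[k := int i])!k < int (s!k)"
        by (rule in_box_Pk) (use k ls in simp)
      moreover have "(y[k := int i])!k = int i" using k ly by simp
      ultimately have ib: "in_box s (y[k := int i])" using True k ls i unfolding K_def by simp
      have lt: "length ?t = length g" using lo ly lg by simp
      have "CB (y[k := int i]) = conv G H ?t" using ib by (simp add: CB_def conv_box_def)
      also have "\<dots> = (\<Sum>\<tau>\<in>{\<tau>. in_box g \<tau>}. G \<tau> * H (map2 (-) ?t \<tau>))"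
        by (rule conv_sum[OF assms(6) lt])
      also have "\<dots> = (\<Sum>\<tau>\<in>?B. \<Sum>a\<in>{0..<int (g!k)}. G (\<tau>[k:=a]) * H (map2 (-) ?t (\<tau>[k:=a])))"
        by (rule box_split) (use k lg in simp)
      also have "\<dots> = (\<Sum>\<tau>\<in>?B. \<Sum>a\<in>{0..<int (g!k)}. \<Sum>q\<in>?Q. (cG (fst q) \<tau> * cH (snd q) (D \<tau>)) * ?Y q a)"
      proof (intro sum.cong refl)
        fix \<tau> a assume \<tau>: "\<tau> \<in> ?B"
        have l\<tau>: "length \<tau> = n" using \<tau> lg by (auto simp: in_box_def)
        have e1: "G (\<tau>[k:=a]) = (\<Sum>u\<in>bG. cG u \<tau> * vf (g!k) u a)"
          using repG invG k l\<tau> by simp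
        have e2: "H (map2 (-) ?t (\<tau>[k:=a])) = (\<Sum>p\<in>bH. cH p (D \<tau>) * vf (h!k) p (off!k + int i - a))"
        proof -
          have "map2 (-) ?t (\<tau>[k:=a]) = (D \<tau>)[k := off!k + int i - a]"
            unfolding D_def by (rule list_shift[OF lo ly l\<tau> k])
          moreover have "length (D \<tau>) = n" using lo ly l\<tau> by (simp add: D_def)
          ultimately show ?thesis using repH invH k by simp
        qed
        show "G (\<tau>[k:=a]) * H (map2 (-) ?t (\<tau>[k:=a])) = (\<Sum>q\<in>?Q. (cG (fst q) \<tau> * cH (snd q) (D \<tau>)) * ?Y q a)"
          unfolding e1 e2 sum_product sum.cartesian_product by (intro sum.cong refl) (auto simp: algebra_simps)
      qed
      also have "\<dots> = (\<Sum>\<tau>\<in>?B. \<Sum>q\<in>?Q. \<Sum>a\<in>{0..<int (g!k)}. (cG (fst q) \<tau> * cH (snd q) (D \<tau>)) * ?Y q a)"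
        by (intro sum.cong refl) (rule sum.swap)
      also have "\<dots> = (\<Sum>q\<in>?Q. \<Sum>\<tau>\<in>?B. \<Sum>a\<in>{0..<int (g!k)}. (cG (fst q) \<tau> * cH (snd q) (D \<tau>)) * ?Y q a)"
        by (rule sum.swap)
      also have "\<dots> = (\<Sum>q\<in>?Q. (\<Sum>\<tau>\<in>?B. cG (fst q) \<tau> * cH (snd q) (D \<tau>)) * (\<Sum>a\<in>{0..<int (g!k)}. ?Y q a))"
        by (intro sum.cong refl) (simp only: sum_product)
      also have "\<dots> = (\<Sum>q\<in>?Q. \<beta> q * w q $ i)"
        using i unfolding \<beta>_def w_def K_def by simp
      finally show "CB (y[k := int i]) = (\<Sum>q\<in>?Q. \<beta> q * w q $ i)" .
    qed
  qed
  have r2: "tucker_rank k s CB \<le> tucker_rank k g G * tucker_rank k h H"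
  proof -
    have "vec_space.rank K M \<le> card ?Q"
    proof (rule vec_space.rank_le_family[OF Mc, of ?Q w])
      show "finite ?Q" using bG bH by simp
      show "w ` ?Q \<subseteq> carrier_vec K" by (auto simp: w_def)
      show "\<forall>c\<in>set (cols M). \<exists>\<beta>. \<forall>i<K. c $ i = (\<Sum>q\<in>?Q. \<beta> q * w q $ i)"
      proof
        fix c assume "c \<in> set (cols M)"
        then obtain y where ly: "length y = n" and cy: "\<forall>i<K. c $ i = CB (y[k := int i])" using colsM by blast
        obtain \<beta> where "\<forall>i<K. CB (y[k := int i]) = (\<Sum>q\<in>?Q. \<beta> q * w q $ i)" using key[OF ly] by blast
        then show "\<exists>\<beta>. \<forall>i<K. c $ i = (\<Sum>q\<in>?Q. \<beta> q * w q $ i)" using cy by auto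
      qed
    qed
    then have "vec_space.rank (s!k) (matricization k s CB) \<le> card bG * card bH"
      unfolding M_def K_def by (simp add: card_cartesian_product)
    then show ?thesis unfolding tucker_rank_def[of k s] using bG(2) bH(2) by simp
  qed
  show ?thesis using r1 r2 unfolding CB_def K_def by simp
qed

end
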